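(* Let $r,K,\alpha,\phi,c,m_1,m_2,\lambda,a,d,\delta,\gamma,\sigma,\eta$ be positive constants with $\phi<1$ and $m_1>m_2$, and consider the system \[ \begin{cases} \dot X = rX\left(1-\frac{X}{K}\right)-\frac{\alpha XS}{c+X}-\frac{\phi\alpha XI}{c+X},\\[1mm] \dot S = \frac{m_1\alpha XS}{c+X}-\frac{\lambda AS}{a+A}-dS,\\[1mm] \dot I = \frac{m_2\phi\alpha XI}{c+X}+\frac{\lambda AS}{a+A}-(d+\delta)I,\\[1mm] \dot A = \gamma+\sigma(S+I)-\eta A. \end{cases} \] Then the axial equilibrium $E_0=(0,0,0,\gamma/\eta)$ is always unstable. *)

theory Defs
  imports "HOL-Analysis.Analysis"
begin

definition eco_field ::
  "real \<Rightarrow> real \<Rightarrow> real \<Rightarrow> real \<Rightarrow> real \<Rightarrow> real \<Rightarrow> real \<Rightarrow> real \<Rightarrow> real \<Rightarrow> real \<Rightarrow> real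
   \<Rightarrow> real \<Rightarrow> real \<Rightarrow> real \<Rightarrow> real^4 \<Rightarrow> real^4" where
  "eco_field r K \<alpha> \<phi> c m1 m2 lam a d \<delta> \<gamma> \<sigma> \<eta> v =
     (let X = v$1; S = v$2; I = v$3; A = v$4 in
      vector [ r*X*(1 - X/K) - \<alpha>*X*S/(c+X) - \<phi>*\<alpha>*X*I/(c+X),
               m1*\<alpha>*X*S/(c+X) - lam*A*S/(a+A) - d*S,
               m2*\<phi>*\<alpha>*X*I/(c+X) + lam*A*S/(a+A) - (d+\<delta>)*I,
               \<gamma> + \<sigma>*(S+I) - \<eta>*A ])"

definition is_solution :: "(real^4 \<Rightarrow> real^4) \<Rightarrow> (real \<Rightarrow> real^4) \<Rightarrow> bool" where
  "is_solution F x \<longleftrightarrow> (\<forall>t\<ge>0. (x has_vector_derivative F (x t)) (at t within {0..}))"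

definition equilibrium :: "(real^4 \<Rightarrow> real^4) \<Rightarrow> real^4 \<Rightarrow> bool" where
  "equilibrium F e \<longleftrightarrow> F e = 0"

definition lyapunov_stable :: "(real^4 \<Rightarrow> real^4) \<Rightarrow> real^4 \<Rightarrow> bool" where
  "lyapunov_stable F e \<longleftrightarrow>
     (\<forall>\<epsilon>>0. \<exists>\<delta>>0. \<forall>x. is_solution F x \<and> norm (x 0 - e) < \<delta> \<longrightarrow>
         (\<forall>t\<ge>0. norm (x t - e) < \<epsilon>))"

definition unstable :: "(real^4 \<Rightarrow> real^4) \<Rightarrow> real^4 \<Rightarrow> bool" where
  "unstable F e \<longleftrightarrow> equilibrium F e \<and> \<not> lyapunov_stable F e"

end

theory Submission
  imports Defs
begin

lemma logistic_deriv:
  fixes r K x0 t :: real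
  assumes "r > 0" "K > 0" "0 < x0" "x0 < K"
  shows "((\<lambda>t. K*x0 / (x0 + (K-x0)*exp(-r*t))) has_real_derivative
          r * (K*x0 / (x0 + (K-x0)*exp(-r*t))) * (1 - (K*x0 / (x0 + (K-x0)*exp(-r*t)))/K)) (at t)"
proof -
  define D where "D = x0 + (K-x0)*exp(-r*t)"
  have Dpos: "D > 0" unfolding D_def using assms by (simp add: add_pos_nonneg)
  have dD: "((\<lambda>t. x0 + (K-x0)*exp(-r*t)) has_real_derivative (K-x0)*(exp(-r*t) * (-r))) (at t)"
    by (auto intro!: derivative_eq_intros)
  have c: "((\<lambda>t. K*x0) has_real_derivative 0) (at t)" by (rule DERIV_const)
  have "((\<lambda>t. K*x0 / (x0 + (K-x0)*exp(-r*t))) has_real_derivative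
          (0 * D - K*x0 * ((K-x0)*(exp(-r*t) * (-r)))) / (D * D)) (at t)"
    using DERIV_divide[OF c dD] Dpos unfolding D_def by simp
  moreover have "(0 * D - K*x0 * ((K-x0)*(exp(-r*t) * (-r)))) / (D * D)
      = r * (K*x0 / D) * (1 - (K*x0/D)/K)"
  proof -
    have "K*x0/D/K = x0/D" using assms by simp
    hence "r * (K*x0 / D) * (1 - (K*x0/D)/K) = r * (K*x0 / D) * ((D - x0)/D)"
      using Dpos by (simp add: diff_divide_distrib)
    also have "D - x0 = (K-x0)*exp(-r*t)" unfolding D_def by simp
    finally have e2: "r * (K*x0 / D) * (1 - (K*x0/D)/K) = r * (K*x0 / D) * ((K-x0)*exp(-r*t)/D)" .
    have "(0 * D - K*x0 * ((K-x0)*(exp(-r*t) * (-r)))) / (D * D) = r * (K*x0 / D) * ((K-x0)*exp(-r*t)/D)"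
      using Dpos by (simp add: field_simps)
    with e2 show ?thesis by simp
  qed
  ultimately show ?thesis unfolding D_def by simp
qed

lemma vec4 [simp]:
 "(vector [x,y,z,w] ::('a::zero)^4)$1 = x"
 "(vector [x,y,z,w] ::('a::zero)^4)$2 = y"
 "(vector [x,y,z,w] ::('a::zero)^4)$3 = z"
 "(vector [x,y,z,w] ::('a::zero)^4)$4 = w"
  unfolding vector_def by simp_all

lemma eq0: "eco_field r K \<alpha> \<phi> c m1 m2 lam a d \<delta> \<gamma> \<sigma> \<eta> (vector [0, 0, 0, \<gamma>/\<eta>]) = 0" if "\<eta> > 0"
    unfolding  eco_field_def Let_def using that
    by (simp add: vec_eq_iff forall_4)

lemma eqF: "eco_field r K \<alpha> \<phi> c m1 m2 lam a d \<delta> \<gamma> \<sigma> \<eta> (Y *\<^sub>R vector [1,0,0,0] + vector [0, 0, 0, \<gamma>/\<eta>]) = (r * Y * (1 - Y / K)) *\<^sub>R vector [1,0,0,0]" if "\<eta> > 0"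
    unfolding  eco_field_def Let_def using that
    by (simp add: vec_eq_iff forall_4)

lemma normx0: "norm (x0 *\<^sub>R (vector [1,0,0,0]::real^4)) = x0" if "x0 > 0" using that
      by (simp add: norm_vec_def L2_set_def sum_4)

theorem theorem2:
  fixes r K \<alpha> \<phi> c m1 m2 lam a d \<delta> \<gamma> \<sigma> \<eta> :: real
  assumes "r > 0" "K > 0" "\<alpha> > 0" "\<phi> > 0" "c > 0" "m1 > 0" "m2 > 0" "lam > 0"
    "a > 0" "d > 0" "\<delta> > 0" "\<gamma> > 0" "\<sigma> > 0" "\<eta> > 0"
    and "\<phi> < 1" and "m1 > m2"
  shows "unstable (eco_field r K \<alpha> \<phi> c m1 m2 lam a d \<delta> \<gamma> \<sigma> \<eta>) (vector [0, 0, 0, \<gamma>/\<eta>])"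
proof -
  let ?F = "eco_field r K \<alpha> \<phi> c m1 m2 lam a d \<delta> \<gamma> \<sigma> \<eta>"
  let ?e = "vector [0, 0, 0, \<gamma>/\<eta>] :: real^4"
  have eq: "equilibrium ?F ?e"
    unfolding equilibrium_def using eq0 assms by blast
  have ns: "\<not> lyapunov_stable ?F ?e"
  proof
    assume "lyapunov_stable ?F ?e"
    moreover have k2: "K/2 > 0" using assms(2) by simp
    ultimately obtain dl where dl: "dl > 0" and H: "\<forall>x. is_solution ?F x \<and> norm (x 0 - ?e) < dl \<longrightarrow>
         (\<forall>t\<ge>0. norm (x t - ?e) < K/2)"
      unfolding lyapunov_stable_def by blast
    define x0 where "x0 = min (dl/2) (K/2)"
    have x0: "0 < x0" "x0 \<le> K/2" "x0 < dl" using dl assms(2) by (auto simp: x0_def)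
    define X where "X = (\<lambda>t. K*x0 / (x0 + (K-x0)*exp(-r*t)))"
    define e1 where "e1 = (vector [1,0,0,0] :: real^4)"
    define x where "x = (\<lambda>t. X t *\<^sub>R e1 + ?e)"
    have sol: "is_solution ?F x"
      unfolding is_solution_def
    proof (intro allI impI)
      fix t :: real assume "t \<ge> 0"
      have dX: "(X has_real_derivative r * X t * (1 - X t / K)) (at t)"
        unfolding X_def using logistic_deriv[of r K x0 t] assms x0 by simp
      have "(x has_vector_derivative (r * X t * (1 - X t / K)) *\<^sub>R e1) (at t)"
      proof -
        have "((\<lambda>t. X t *\<^sub>R e1) has_vector_derivative (X t *\<^sub>R 0 + (r * X t * (1 - X t / K)) *\<^sub>R e1)) (at t)"
          by (rule has_vector_derivative_scaleR[OF dX has_vector_derivative_const])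
        hence "((\<lambda>t. X t *\<^sub>R e1 + ?e) has_vector_derivative ((r * X t * (1 - X t / K)) *\<^sub>R e1)) (at t)"
          by (simp add: has_vector_derivative_add_const)
        thus ?thesis unfolding x_def .
      qed
      moreover have "?F (x t) = (r * X t * (1 - X t / K)) *\<^sub>R e1"
        unfolding x_def e1_def using eqF assms by blast
      ultimately show "(x has_vector_derivative ?F (x t)) (at t within {0..})"
        by (simp add: has_vector_derivative_at_within)
    qed
    have x00: "x 0 - ?e = x0 *\<^sub>R e1" unfolding x_def X_def using x0 assms by simp
    have "norm (x 0 - ?e) = x0" unfolding x00 e1_def using x0 normx0 by blast
    hence "is_solution ?F x \<and> norm (x 0 - ?e) < dl" using sol x0 by simp
    hence all: "\<forall>t\<ge>0. norm (x t - ?e) < K/2" using H by blast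
    define T where "T = ln ((K - x0)/x0) / r"
    have "(K-x0)/x0 \<ge> 1" using x0 by (simp add: field_simps)
    hence T0: "T \<ge> 0" unfolding T_def using assms by simp
    have "exp (-r*T) = x0/(K-x0)" unfolding T_def using assms x0
      by (simp add: exp_minus exp_ln)
    hence XT: "X T = K/2" unfolding X_def using x0 assms by (simp add: field_simps)
    have "\<bar>(x T - ?e) $ 1\<bar> \<le> norm (x T - ?e)" by (rule component_le_norm_cart)
    moreover have "(x T - ?e) $ 1 = K/2" unfolding x_def e1_def using XT by simp
    moreover have "norm (x T - ?e) < K/2" using all T0 by blast
    ultimately show False by linarith
  qed
  show ?thesis unfolding unstable_def using eq ns by simp
qed

end
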